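(* Let $q$ be a prime power, let $n$ be a positive integer with $\gcd(n,q)=1$, and let $t\ge 2$ be an integer. Let $R=\mathbb{F}_{q^2}+u\mathbb{F}_{q^2}+\dots+u^{t-1}\mathbb{F}_{q^2}$ with $u^t=0$. Then there exists a Hermitian self-dual cyclic code of length $n$ over $R$ if and only if $t$ is even.
   Context: $R\cong\mathbb{F}_{q^2}[z]/\langle z^t\rangle$ is a finite chain ring with maximal ideal $\langle u\rangle$ and nilpotency index $t$. The conjugation on $R$ is $\sum_{i}u^ia_i\mapsto\sum_i u^ia_i^q$ ($a_i\in\mathbb{F}_{q^2}$), written $a\mapsto\bar a$. A linear code of length $n$ over $R$ is an $R$-submodule of $R^n$; it is cyclic if it is invariant under $(c_0,\dots,c_{n-1})\mapsto(c_{n-1},c_0,\dots,c_{n-2})$. The Hermitian inner product is $\langle\mathbf u,\mathbf v\rangle_{\mathrm H}=\sum_{i=0}^{n-1}u_i\bar v_i$, $C^{\perp_{\mathrm H}}=\{\mathbf u\in R^n:\langle\mathbf u,\mathbf v\rangle_{\mathrm H}=0\ \forall \mathbf v\in C\}$, and $C$ is Hermitian self-dual if $C=C^{\perp_{\mathrm H}}$. *)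

theory Defs
  imports "HOL-Computational_Algebra.Computational_Algebra"
begin

text \<open>The chain ring R = F[z]/<z^t>, F = F_{q^2}: elements are represented by their
  canonical residues, i.e. polynomials of degree < t; multiplication is reduction mod z^t.\<close>

definition zt :: "nat \<Rightarrow> 'a::field poly" where
  "zt t = [:0, 1:] ^ t"

definition ring_elems :: "nat \<Rightarrow> 'a::field poly set" where
  "ring_elems t = {p. degree p < t}"

definition rmult :: "nat \<Rightarrow> 'a::field poly \<Rightarrow> 'a poly \<Rightarrow> 'a poly" where
  "rmult t a b = (a * b) mod zt t"

definition conj_R :: "nat \<Rightarrow> 'a::field poly \<Rightarrow> 'a poly" where
  "conj_R q a = map_poly (\<lambda>x. x ^ q) a"

definition Rvecs :: "nat \<Rightarrow> nat \<Rightarrow> (nat \<Rightarrow> 'a::field poly) set" where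
  "Rvecs n t = {v. (\<forall>i<n. v i \<in> ring_elems t) \<and> (\<forall>i\<ge>n. v i = 0)}"

definition linear_code :: "nat \<Rightarrow> nat \<Rightarrow> (nat \<Rightarrow> 'a::field poly) set \<Rightarrow> bool" where
  "linear_code n t C \<longleftrightarrow> C \<subseteq> Rvecs n t \<and> (\<lambda>i. 0) \<in> C \<and>
     (\<forall>x\<in>C. \<forall>y\<in>C. (\<lambda>i. x i + y i) \<in> C) \<and>
     (\<forall>r\<in>ring_elems t. \<forall>x\<in>C. (\<lambda>i. rmult t r (x i)) \<in> C)"

definition cyc_shift :: "nat \<Rightarrow> (nat \<Rightarrow> 'b::zero) \<Rightarrow> nat \<Rightarrow> 'b" where
  "cyc_shift n v i = (if i < n then v ((i + n - 1) mod n) else 0)"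

definition cyclic_code :: "nat \<Rightarrow> nat \<Rightarrow> (nat \<Rightarrow> 'a::field poly) set \<Rightarrow> bool" where
  "cyclic_code n t C \<longleftrightarrow> linear_code n t C \<and> (\<forall>x\<in>C. cyc_shift n x \<in> C)"

definition herm_ip :: "nat \<Rightarrow> nat \<Rightarrow> nat \<Rightarrow> (nat \<Rightarrow> 'a::field poly) \<Rightarrow> (nat \<Rightarrow> 'a poly) \<Rightarrow> 'a poly" where
  "herm_ip q n t u v = (\<Sum>i<n. rmult t (u i) (conj_R q (v i)))"

definition herm_dual :: "nat \<Rightarrow> nat \<Rightarrow> nat \<Rightarrow> (nat \<Rightarrow> 'a::field poly) set \<Rightarrow> (nat \<Rightarrow> 'a poly) set" where
  "herm_dual q n t C = {u \<in> Rvecs n t. \<forall>v\<in>C. herm_ip q n t u v = 0}"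

definition herm_self_dual :: "nat \<Rightarrow> nat \<Rightarrow> nat \<Rightarrow> (nat \<Rightarrow> 'a::field poly) set \<Rightarrow> bool" where
  "herm_self_dual q n t C \<longleftrightarrow> C = herm_dual q n t C"

end

theory Submission
  imports Defs "HOL-Number_Theory.Residues"
begin

hide_const (open) UnivPoly.coeff UnivPoly.monom Coset.order

lemma zt_monom: "zt t = (monom 1 t :: 'a::field poly)"
  by (simp add: zt_def monom_altdef)

lemma coeff_conj: "q > 0 \<Longrightarrow> coeff (conj_R q p) i = coeff p i ^ q"
  by (simp add: conj_R_def coeff_map_poly)

lemma monom_dvd_conj_iff:
  fixes p :: "'a::field poly"
  assumes "q > 0"
  shows "monom 1 k dvd conj_R q p \<longleftrightarrow> monom 1 k dvd p"
  using assms by (simp add: monom_1_dvd_iff' coeff_conj)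

lemma conj_zero [simp]: "conj_R q (0::'a::field poly) = 0"
  by (simp add: conj_R_def)

lemma conj_monom1: "q > 0 \<Longrightarrow> conj_R q (monom (1::'a::field) k) = monom 1 k"
  by (simp add: conj_R_def map_poly_monom)

lemma conj_nonzero: "q > 0 \<Longrightarrow> p \<noteq> 0 \<Longrightarrow> conj_R q (p::'a::field poly) \<noteq> 0"
  by (metis coeff_conj leading_coeff_0_iff power_not_zero coeff_0 poly_eqI)

lemma order_conj:
  fixes p :: "'a::field poly"
  assumes "q > 0" "p \<noteq> 0"
  shows "order 0 (conj_R q p) = order 0 p"
proof -
  have "\<And>k. k \<le> order 0 (conj_R q p) \<longleftrightarrow> k \<le> order 0 p"
    using assms conj_nonzero[OF assms] monom_dvd_conj_iff[OF assms(1)]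
    by (metis monom_1_dvd_iff)
  then show ?thesis by (meson le_antisym order_refl)
qed

lemma char_eq:
  fixes p k q :: nat
  assumes "prime p" "k > 0" "q = p ^ k" "card (UNIV :: ('a::{field,finite}) set) = q ^ 2"
  shows "CHAR('a) = p"
proof -
  have pr: "prime CHAR('a)"
    by (intro prime_CHAR_semidom finite_imp_CHAR_pos) simp
  have "CHAR('a) dvd p ^ (k * 2)"
    using CHAR_dvd_CARD[where 'a='a] assms by (simp add: power_mult)
  then have "CHAR('a) dvd p" using pr prime_dvd_power by blast
  then show ?thesis using pr assms(1) by (simp add: primes_dvd_imp_eq)
qed

lemma conj_add:
  fixes a b :: "'a::field poly"
  assumes "prime CHAR('a)" "q = CHAR('a) ^ k" 
  shows "conj_R q (a + b) = conj_R q a + conj_R q b"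
proof -
  have q0: "q > 0" using assms by (simp add: prime_gt_0_nat)
  show ?thesis
    by (rule poly_eqI) (simp add: coeff_conj[OF q0] freshmans_dream'[OF assms])
qed

lemma conj_sum:
  fixes f :: "nat \<Rightarrow> 'a::field poly"
  assumes "prime CHAR('a)" "q = CHAR('a) ^ k" 
  shows "conj_R q (\<Sum>i\<in>A. f i) = (\<Sum>i\<in>A. conj_R q (f i))"
proof (induction A rule: infinite_finite_induct)
  case (insert x F)
  then show ?case by (simp add: conj_add[OF assms])
qed simp_all

lemma shift_iter:
  assumes "n > 0" "k \<le> n"
  shows "(cyc_shift n ^^ k) v i = (if i < n then v ((i + n - k) mod n) else if k = 0 then v i else 0)"
  using assms(2)
proof (induction k arbitrary: i)
  case 0
  then show ?case using assms by simp
next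
  case (Suc k)
  show ?case
  proof (cases "i < n")
    case True
    have "((i + n - 1) mod n + n - k) mod n = ((i + n - 1) mod n + (n - k)) mod n"
      using Suc.prems by simp
    also have "\<dots> = ((i + n - 1) + (n - k)) mod n"
      by (simp add: mod_add_left_eq)
    also have "(i + n - 1) + (n - k) = (i + n - Suc k) + n"
      using Suc.prems assms(1) by simp
    also have "(i + n - Suc k + n) mod n = (i + n - Suc k) mod n"
      by simp
    finally have e: "((i + n - 1) mod n + n - k) mod n = (i + n - Suc k) mod n" .
    have "(cyc_shift n ^^ Suc k) v i = (cyc_shift n ^^ k) v ((i + n - 1) mod n)"
      using True by (simp add: cyc_shift_def)
    also have "\<dots> = v (((i + n - 1) mod n + n - k) mod n)"
      using Suc.IH[of "(i + n - 1) mod n"] Suc.prems assms(1) by simp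
    finally show ?thesis using e True by simp
  next
    case False
    then show ?thesis by (simp add: cyc_shift_def)
  qed
qed

lemma mod_shift:
  assumes "a < (n::nat)" "i < n"
  shows "(i + n - a) mod n = (if a \<le> i then i - a else i + n - a)"
proof (cases "a \<le> i")
  case True
  have "i + n - a = (i - a) + n" using True by simp
  then have "(i + n - a) mod n = (i - a) mod n" by simp
  then show ?thesis using True assms by simp
qed (use assms in simp)

lemma mod_shift_inj: "i < n \<Longrightarrow> inj_on (\<lambda>k. (i + n - k) mod n) {..<(n::nat)}"
  unfolding inj_on_def by (auto simp add: mod_shift split: if_splits)

lemma sum_shift_reindex:
  assumes "i < (n::nat)"
  shows "(\<Sum>k<n. v ((i + n - k) mod n)) = (\<Sum>j<n. (v j :: 'b::comm_monoid_add))"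
proof -
  let ?h = "\<lambda>k. (i + n - k) mod n"
  have sub: "?h ` {..<n} \<subseteq> {..<n}" using assms by auto
  have "?h ` {..<n} = {..<n}"
    by (rule endo_inj_surj[OF _ sub mod_shift_inj[OF assms]]) simp
  then have "bij_betw ?h {..<n} {..<n}"
    using mod_shift_inj[OF assms] by (simp add: bij_betw_def)
  then show ?thesis by (rule sum.reindex_bij_betw)
qed

lemma sum_shifts_in:
  fixes C :: "(nat \<Rightarrow> 'a::field poly) set"
  assumes cyc: "cyclic_code n t C" and v: "v \<in> C" and n: "n > 0"
  shows "(\<lambda>i. if i < n then (\<Sum>j<n. v j) else 0) \<in> C"
proof -
  have lin: "linear_code n t C" using cyc by (simp add: cyclic_code_def)
  have sh: "(cyc_shift n ^^ k) v \<in> C" for k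
    by (induction k) (use v cyc in \<open>auto simp: cyclic_code_def\<close>)
  have part: "(\<lambda>i. \<Sum>k<m. (cyc_shift n ^^ k) v i) \<in> C" for m
  proof (induction m)
    case 0
    then show ?case using lin by (simp add: linear_code_def)
  next
    case (Suc m)
    then show ?case using lin sh[of m] by (simp add: linear_code_def)
  qed
  have vz: "v i = 0" if "i \<ge> n" for i
    using v lin that by (auto simp: linear_code_def Rvecs_def)
  have "(\<lambda>i. \<Sum>k<n. (cyc_shift n ^^ k) v i) = (\<lambda>i. if i < n then (\<Sum>j<n. v j) else 0)"
  proof
    fix i
    show "(\<Sum>k<n. (cyc_shift n ^^ k) v i) = (if i < n then (\<Sum>j<n. v j) else 0)"
    proof (cases "i < n")
      case True
      then have "(\<Sum>k<n. (cyc_shift n ^^ k) v i) = (\<Sum>k<n. v ((i + n - k) mod n))"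
        using n by (intro sum.cong) (auto simp: shift_iter)
      then show ?thesis using True sum_shift_reindex[OF True] by simp
    next
      case False
      then show ?thesis using n vz[of i] by (simp add: shift_iter)
    qed
  qed
  then show ?thesis using part[of n] by simp
qed

lemma poly_mod_sum:
  fixes f :: "nat \<Rightarrow> 'a::field poly"
  shows "(\<Sum>i\<in>A. f i mod z) = (\<Sum>i\<in>A. f i) mod z"
proof (induction A rule: infinite_finite_induct)
  case (insert x F)
  then show ?case by (simp add: poly_mod_add_left)
qed simp_all

lemma coeff_of_nat_mult: "coeff (of_nat n * p) i = of_nat n * coeff (p::'a::field poly) i"
  by (simp add: of_nat_poly)

lemma odd_impossible:
  fixes C :: "(nat \<Rightarrow> 'a::field poly) set"
  assumes pr: "prime CHAR('a)" and qk: "q = CHAR('a) ^ k"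
    and nn: "of_nat n \<noteq> (0::'a)" and n: "n > 0"
    and cyc: "cyclic_code n t C" and sd: "herm_self_dual q n t C" and tm: "t = 2 * m + 1"
  shows False
proof -
  have q0: "q > 0" using pr qk by (simp add: prime_gt_0_nat)
  have lin: "linear_code n t C" using cyc by (simp add: cyclic_code_def)
  have nnp: "of_nat n \<noteq> (0::'a poly)" using nn by (simp add: of_nat_poly)
  have B: "monom 1 (m + 1) dvd (\<Sum>j<n. v j)" if v: "v \<in> C" for v
  proof -
    define s where "s = (\<Sum>j<n. v j)"
    let ?w = "\<lambda>i. if i < n then s else 0"
    have wC: "?w \<in> C" unfolding s_def by (rule sum_shifts_in[OF cyc v n])
    then have "?w \<in> herm_dual q n t C" using sd by (simp add: herm_self_dual_def)
    then have "herm_ip q n t ?w ?w = 0" using wC by (simp add: herm_dual_def)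
    moreover have "herm_ip q n t ?w ?w = of_nat n * rmult t s (conj_R q s)"
      unfolding herm_ip_def by simp
    ultimately have "rmult t s (conj_R q s) = 0" using nnp by simp
    then have dv: "monom 1 t dvd s * conj_R q s"
      by (simp add: rmult_def zt_monom mod_eq_0_iff_dvd)
    show ?thesis
    proof (cases "s = 0")
      case True
      then show ?thesis by (simp add: s_def)
    next
      case False
      have cz: "conj_R q s \<noteq> 0" using conj_nonzero[OF q0 False] .
      have "t \<le> order 0 (s * conj_R q s)"
        using dv False cz by (simp add: monom_1_dvd_iff)
      also have "\<dots> = 2 * order 0 s"
        using False cz by (simp add: order_mult order_conj[OF q0 False])
      finally have "m + 1 \<le> order 0 s" using tm by simp
      then show ?thesis using False by (simp add: monom_1_dvd_iff s_def)
    qed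
  qed
  define u where "u = (\<lambda>i. if i < n then monom (1::'a) m else 0)"
  have uR: "u \<in> Rvecs n t"
    using tm by (simp add: u_def Rvecs_def ring_elems_def degree_monom_eq)
  have "herm_ip q n t u v = 0" if v: "v \<in> C" for v
  proof -
    obtain r where r: "conj_R q (\<Sum>j<n. v j) = monom 1 (m + 1) * r"
      using B[OF v] monom_dvd_conj_iff[OF q0] by (metis dvdE)
    have "herm_ip q n t u v = (\<Sum>i<n. monom 1 m * conj_R q (v i)) mod zt t"
      unfolding herm_ip_def rmult_def u_def by (simp add: poly_mod_sum)
    also have "\<dots> = (monom 1 m * conj_R q (\<Sum>j<n. v j)) mod zt t"
      by (simp add: conj_sum[OF pr qk] sum_distrib_left)
    also have "\<dots> = (monom 1 t * r) mod monom 1 t"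
    proof -
      have mm: "monom (1::'a) m * monom 1 (m + 1) = monom 1 t" using tm by (simp add: mult_monom mult_2)
      show ?thesis unfolding r zt_monom mult.assoc[symmetric] mm ..
    qed
    also have "\<dots> = 0" by simp
    finally show ?thesis .
  qed
  then have "u \<in> herm_dual q n t C" using uR by (simp add: herm_dual_def)
  then have "u \<in> C" using sd by (simp add: herm_self_dual_def)
  from B[OF this] have "monom 1 (m + 1) dvd (\<Sum>j<n. u j)" .
  moreover have "(\<Sum>j<n. u j) = of_nat n * monom 1 m" by (simp add: u_def)
  ultimately have "coeff (of_nat n * monom (1::'a) m) m = 0"
    by (simp add: monom_1_dvd_iff' del: of_nat_poly)
  then show False using nn by (simp add: coeff_of_nat_mult del: of_nat_poly)
qed

lemma even_exists:
  assumes q0: "q > 0" and th: "t = 2 * h" and h: "h > 0"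
  shows "\<exists>C :: (nat \<Rightarrow> 'a::field poly) set. cyclic_code n t C \<and> herm_self_dual q n t C"
proof -
  define C :: "(nat \<Rightarrow> 'a poly) set" where "C = {v \<in> Rvecs n t. \<forall>i. monom 1 h dvd v i}"
  have ztnz: "zt t \<noteq> (0::'a poly)" by (simp add: zt_monom)
  have degzt: "degree (zt t :: 'a poly) = t" by (simp add: zt_monom degree_monom_eq)
  have hh: "monom (1::'a) h * monom 1 h = monom 1 t" using th by (simp add: mult_monom mult_2)
  have hdt: "monom (1::'a) h dvd zt t" unfolding zt_monom hh[symmetric] by simp
  have degmod: "degree ((x :: 'a poly) mod zt t) < t" for x
    using degree_mod_less[OF ztnz, of x] degzt th h by auto
  have lin: "linear_code n t C"
    unfolding linear_code_def
  proof (intro conjI ballI)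
    show "C \<subseteq> Rvecs n t" by (auto simp: C_def)
    show "(\<lambda>i. 0) \<in> C" using th h by (simp add: C_def Rvecs_def ring_elems_def)
  next
    fix x y assume "x \<in> C" "y \<in> C"
    then show "(\<lambda>i. x i + y i) \<in> C"
      by (auto simp: C_def Rvecs_def ring_elems_def intro: le_less_trans[OF degree_add_le_max])
  next
    fix r :: "'a poly" and x assume "r \<in> ring_elems t" "x \<in> C"
    then show "(\<lambda>i. rmult t r (x i)) \<in> C"
      using degmod hdt by (auto simp: C_def Rvecs_def rmult_def ring_elems_def intro!: dvd_mod dvd_mult)
  qed
  have cyc: "cyclic_code n t C"
    unfolding cyclic_code_def
  proof (intro conjI ballI lin)
    fix x assume x: "x \<in> C"
    show "cyc_shift n x \<in> C"
      using x th h by (auto simp: C_def Rvecs_def cyc_shift_def ring_elems_def)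
  qed
  have sub1: "C \<subseteq> herm_dual q n t C"
  proof
    fix u assume u: "u \<in> C"
    have "herm_ip q n t u v = 0" if v: "v \<in> C" for v
    proof -
      have "rmult t (u i) (conj_R q (v i)) = 0" for i
      proof -
        have "monom 1 h dvd conj_R q (v i)" using v by (simp add: C_def monom_dvd_conj_iff[OF q0])
        moreover have "monom 1 h dvd u i" using u by (simp add: C_def)
        ultimately have "monom 1 h * monom 1 h dvd u i * conj_R q (v i)" by (rule mult_dvd_mono[rotated])
        then show ?thesis by (simp add: hh rmult_def zt_monom mod_eq_0_iff_dvd)
      qed
      then show ?thesis by (simp add: herm_ip_def)
    qed
    then show "u \<in> herm_dual q n t C" using u by (simp add: herm_dual_def C_def)
  qed
  have sub2: "herm_dual q n t C \<subseteq> C"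
  proof
    fix u assume u: "u \<in> herm_dual q n t C"
    have uR: "u \<in> Rvecs n t" using u by (simp add: herm_dual_def)
    have "monom 1 h dvd u i" for i
    proof (cases "i < n")
      case False
      then show ?thesis using uR by (simp add: Rvecs_def)
    next
      case True
      define e where "e = (\<lambda>j. if j = i then monom (1::'a) h else 0)"
      have eC: "e \<in> C" using True th h
        by (auto simp: e_def C_def Rvecs_def ring_elems_def degree_monom_eq)
      then have "herm_ip q n t u e = 0" using u by (simp add: herm_dual_def)
      moreover have "herm_ip q n t u e = rmult t (u i) (monom 1 h)"
        unfolding herm_ip_def e_def using True
        by (simp add: conj_monom1[OF q0] if_distrib rmult_def cong: if_cong)
      ultimately have "monom 1 t dvd u i * monom 1 h"
        by (simp add: rmult_def zt_monom mod_eq_0_iff_dvd)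
      then have "monom 1 h * monom 1 h dvd u i * monom 1 h" by (simp add: hh)
      then have "monom 1 h dvd u i" by (simp add: mult.commute[of "u i"])
      then show ?thesis .
    qed
    then show "u \<in> C" using uR by (simp add: C_def)
  qed
  show ?thesis using cyc sub1 sub2 by (auto simp: herm_self_dual_def)
qed

theorem theorem3p8:
  fixes q n t :: nat
  assumes "\<exists>p k. prime p \<and> k > 0 \<and> q = p ^ k"
    and "card (UNIV :: ('a::{field,finite}) set) = q ^ 2"
    and "n > 0" and "coprime n q" and "t \<ge> 2"
  shows "(\<exists>C :: (nat \<Rightarrow> 'a poly) set. cyclic_code n t C \<and> herm_self_dual q n t C)
         \<longleftrightarrow> even t"
proof -
  obtain p k where pk: "prime p" "k > 0" "q = p ^ k" using assms(1) by blast
  have ch: "CHAR('a) = p" using char_eq[OF pk assms(2)] .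
  have pr: "prime CHAR('a)" using ch pk by simp
  have qk: "q = CHAR('a) ^ k" using ch pk by simp
  have q0: "q > 0" using pk by (simp add: prime_gt_0_nat)
  have nn: "of_nat n \<noteq> (0::'a)"
  proof
    assume "of_nat n = (0::'a)"
    then have "p dvd n" using ch by (simp add: of_nat_eq_0_iff_char_dvd)
    moreover have "p dvd q" using pk by (simp add: dvd_power)
    ultimately show False using assms(4) pk(1)
      by (metis coprime_common_divisor not_prime_unit)
  qed
  show ?thesis
  proof
    assume "\<exists>C :: (nat \<Rightarrow> 'a poly) set. cyclic_code n t C \<and> herm_self_dual q n t C"
    then obtain C :: "(nat \<Rightarrow> 'a poly) set" where C: "cyclic_code n t C" "herm_self_dual q n t C"
      by blast
    show "even t"
    proof (rule ccontr)
      assume "odd t"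
      then obtain m where "t = 2 * m + 1" by (metis oddE)
      then show False using odd_impossible[OF pr qk nn assms(3) C] by blast
    qed
  next
    assume "even t"
    then obtain h where th: "t = 2 * h" by blast
    then have "h > 0" using assms(5) by simp
    then show "\<exists>C :: (nat \<Rightarrow> 'a poly) set. cyclic_code n t C \<and> herm_self_dual q n t C"
      using even_exists[OF q0 th] by blast
  qed
qed

end
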